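(* Let $\Delta$ be a finite set with $|\Delta|\ge2$, $\ell\ge2$, $\Omega=\Delta^\ell$, $W=\mathrm{Sym}\,\Delta\wr S_\ell$ in product action on $\Omega$, $G\le W$, and let $M$ be a minimal normal subgroup of $G$ transitive on $\Omega$, $M=T_1\times\cdots\times T_k$ with the $T_i$ isomorphic finite simple groups. Let $\Gamma$ be a connected graph with vertex set $\Omega$ with $G\le\mathrm{Aut}\,\Gamma$. Assume $\Gamma$ is $M$-arc-transitive, that $G\pi$ is transitive on $\{1,\dots,\ell\}$, and that $G\le G^{(1)}\wr(G\pi)$. Let $\alpha=(\alpha_1,\dots,\alpha_1)\in\Omega$, $\beta=(\beta_1,\dots,\beta_\ell)\in\Gamma(\alpha)$, and $K=G^{(1)}$. Then there is $h\in(K_{\alpha_1})^\ell$ with $\beta h=(\beta_1,\dots,\beta_1)$. Thus in the image graph $\Gamma h$ the tuples $(\alpha_1,\dots,\alpha_1)$ and $(\beta_1,\dots,\beta_1)$ are adjacent. Furthermore $G^h\le\mathrm{Aut}(\Gamma h)$ and $G^h\le G^{(1)}\wr(G\pi)$.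
   Context: Product action: $(\delta_1,\dots,\delta_\ell)^{(g_1,\dots,g_\ell)h}=(\delta_{1h^{-1}}g_{1h^{-1}},\dots,\delta_{\ell h^{-1}}g_{\ell h^{-1}})$. $\pi:W\to S_\ell$ is the natural projection. For $j$, $W_j$ is the stabiliser of $j$ under $\pi$, $W_j=\mathrm{Sym}\,\Delta\times(\mathrm{Sym}\,\Delta\wr S_{\ell-1})$ with the first factor on the $j$-th coordinate, and the component $G^{(j)}\le\mathrm{Sym}\,\Delta$ is the projection of $G\cap W_j$ onto the first factor. $G^{(1)}\wr(G\pi)$ denotes the subgroup $(G^{(1)})^\ell\rtimes G\pi$ of $W$. $K_{\alpha_1}$ is the stabiliser of $\alpha_1$ in $K$; $(K_{\alpha_1})^\ell\le(\mathrm{Sym}\,\Delta)^\ell$ acts coordinatewise. $\Gamma h$ is the graph on $\Omega$ whose edges are $\{xh,yh\}$ for edges $\{x,y\}$ of $\Gamma$. $\Gamma$ is $M$-arc-transitive if $M$ is transitive on ordered pairs of adjacent vertices; $\Gamma(\alpha)$ is the neighbourhood of $\alpha$. *)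

theory Defs
  imports "HOL-Algebra.Algebra"
begin

text \<open>Points of Omega are tuples indexed by {..<l} (coordinate 0 plays the role of coordinate 1).\<close>

definition Omega :: "nat \<Rightarrow> 'a set \<Rightarrow> (nat \<Rightarrow> 'a) set" where
  "Omega l D = PiE {..<l} (\<lambda>_. D)"

text \<open>The element (g_1,...,g_l)h of W acting on Omega:
  (delta^{(g)h})_i = delta_{i h^{-1}} g_{i h^{-1}}; permutations act as functions.\<close>

definition wr_elt :: "nat \<Rightarrow> 'a set \<Rightarrow> (nat \<Rightarrow> 'a \<Rightarrow> 'a) \<Rightarrow> (nat \<Rightarrow> nat)
    \<Rightarrow> (nat \<Rightarrow> 'a) \<Rightarrow> (nat \<Rightarrow> 'a)" where
  "wr_elt l D gs h = (\<lambda>x \<in> Omega l D. (\<lambda>i \<in> {..<l}.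
      gs (inv_into {..<l} h i) (x (inv_into {..<l} h i))))"

definition Wr :: "nat \<Rightarrow> 'a set \<Rightarrow> ((nat \<Rightarrow> 'a) \<Rightarrow> (nat \<Rightarrow> 'a)) set" where
  "Wr l D = {wr_elt l D gs h | gs h.
      gs \<in> PiE {..<l} (\<lambda>_. carrier (BijGroup D)) \<and> h \<in> carrier (BijGroup {..<l})}"

text \<open>The natural projection pi : W \<rightarrow> S_l (well defined since |Delta| \<ge> 2).\<close>

definition wr_pi :: "nat \<Rightarrow> 'a set \<Rightarrow> ((nat \<Rightarrow> 'a) \<Rightarrow> (nat \<Rightarrow> 'a)) \<Rightarrow> (nat \<Rightarrow> nat)" where
  "wr_pi l D w = (THE h. h \<in> carrier (BijGroup {..<l}) \<and>
      (\<exists>gs \<in> PiE {..<l} (\<lambda>_. carrier (BijGroup D)). w = wr_elt l D gs h))"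

text \<open>The component G^(j): projection onto the j-th factor of G \<inter> W_j.\<close>

definition component :: "nat \<Rightarrow> 'a set \<Rightarrow> ((nat \<Rightarrow> 'a) \<Rightarrow> (nat \<Rightarrow> 'a)) set \<Rightarrow> nat
    \<Rightarrow> ('a \<Rightarrow> 'a) set" where
  "component l D G j = {gs j | gs h.
      gs \<in> PiE {..<l} (\<lambda>_. carrier (BijGroup D)) \<and> h \<in> carrier (BijGroup {..<l})
      \<and> h j = j \<and> wr_elt l D gs h \<in> G}"

definition wreath :: "nat \<Rightarrow> 'a set \<Rightarrow> ('a \<Rightarrow> 'a) set \<Rightarrow> (nat \<Rightarrow> nat) set
    \<Rightarrow> ((nat \<Rightarrow> 'a) \<Rightarrow> (nat \<Rightarrow> 'a)) set" where
  "wreath l D K P = {wr_elt l D gs h | gs h. gs \<in> PiE {..<l} (\<lambda>_. K) \<and> h \<in> P}"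

definition base_power :: "nat \<Rightarrow> 'a set \<Rightarrow> ('a \<Rightarrow> 'a) set
    \<Rightarrow> ((nat \<Rightarrow> 'a) \<Rightarrow> (nat \<Rightarrow> 'a)) set" where
  "base_power l D K = {wr_elt l D gs (\<lambda>i \<in> {..<l}. i) | gs. gs \<in> PiE {..<l} (\<lambda>_. K)}"

abbreviation subgrp :: "('b, 'c) monoid_scheme \<Rightarrow> 'b set \<Rightarrow> ('b, 'c) monoid_scheme" where
  "subgrp G H \<equiv> G\<lparr>carrier := H\<rparr>"

definition minimal_normal :: "('b, 'c) monoid_scheme \<Rightarrow> 'b set \<Rightarrow> bool" where
  "minimal_normal G M \<longleftrightarrow> M \<lhd> G \<and> M \<noteq> {\<one>\<^bsub>G\<^esub>} \<and>
     (\<forall>N. N \<lhd> G \<and> N \<subseteq> M \<longrightarrow> N = {\<one>\<^bsub>G\<^esub>} \<or> N = M)"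

definition ordered_prod :: "('b, 'c) monoid_scheme \<Rightarrow> nat \<Rightarrow> (nat \<Rightarrow> 'b) \<Rightarrow> 'b" where
  "ordered_prod G k t = foldr (\<lambda>i acc. t i \<otimes>\<^bsub>G\<^esub> acc) [0..<k] \<one>\<^bsub>G\<^esub>"

definition internal_direct_product ::
    "('b, 'c) monoid_scheme \<Rightarrow> 'b set \<Rightarrow> nat \<Rightarrow> (nat \<Rightarrow> 'b set) \<Rightarrow> bool" where
  "internal_direct_product G M k Ts \<longleftrightarrow> (\<forall>i<k. subgroup (Ts i) G \<and> Ts i \<subseteq> M) \<and>
     ordered_prod G k \<in> iso (product_group {..<k} (\<lambda>i. subgrp G (Ts i))) (subgrp G M)"

definition graph_on :: "'v set \<Rightarrow> ('v \<Rightarrow> 'v \<Rightarrow> bool) \<Rightarrow> bool" where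
  "graph_on V E \<longleftrightarrow> (\<forall>x y. E x y \<longrightarrow> x \<in> V \<and> y \<in> V \<and> x \<noteq> y \<and> E y x)"

definition connected_graph :: "'v set \<Rightarrow> ('v \<Rightarrow> 'v \<Rightarrow> bool) \<Rightarrow> bool" where
  "connected_graph V E \<longleftrightarrow> (\<forall>x\<in>V. \<forall>y\<in>V. E\<^sup>*\<^sup>* x y)"

definition graph_aut :: "'v set \<Rightarrow> ('v \<Rightarrow> 'v \<Rightarrow> bool) \<Rightarrow> ('v \<Rightarrow> 'v) set" where
  "graph_aut V E = {g \<in> carrier (BijGroup V). \<forall>x\<in>V. \<forall>y\<in>V. E x y \<longleftrightarrow> E (g x) (g y)}"

definition arc_transitive :: "('v \<Rightarrow> 'v \<Rightarrow> bool) \<Rightarrow> ('v \<Rightarrow> 'v) set \<Rightarrow> bool" where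
  "arc_transitive E M \<longleftrightarrow> (\<forall>x y u v. E x y \<and> E u v \<longrightarrow> (\<exists>m\<in>M. m x = u \<and> m y = v))"

definition image_graph :: "('v \<Rightarrow> 'v) \<Rightarrow> ('v \<Rightarrow> 'v \<Rightarrow> bool) \<Rightarrow> ('v \<Rightarrow> 'v \<Rightarrow> bool)" where
  "image_graph h E = (\<lambda>x y. \<exists>u v. E u v \<and> x = h u \<and> y = h v)"

text \<open>Conjugate G^h = h^{-1} G h (right actions), i.e. the maps x \<mapsto> h(g(h^{-1} x)).\<close>

definition conj_set :: "('b, 'c) monoid_scheme \<Rightarrow> 'b set \<Rightarrow> 'b \<Rightarrow> 'b set" where
  "conj_set S G h = {h \<otimes>\<^bsub>S\<^esub> g \<otimes>\<^bsub>S\<^esub> inv\<^bsub>S\<^esub> h | g. g \<in> G}"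

end

theory Submission
  imports Defs "HOL-Computational_Algebra.Primes"
begin

lemma Bij_L: "h \<in> Bij L \<Longrightarrow> inj_on h L \<and> h ` L = L"
  by (auto simp: Bij_def bij_betw_def)

lemma inv_into_L: "h ` L = L \<Longrightarrow> i \<in> L \<Longrightarrow> inv_into L h i \<in> L \<and> h (inv_into L h i) = i"
  by (metis f_inv_into_f inv_into_into)

lemma wr_char:
  assumes x: "x \<in> Omega l D" and h: "h \<in> Bij {..<l}"
  shows "wr_elt l D gs h x = y \<longleftrightarrow> y \<in> extensional {..<l} \<and> (\<forall>j<l. y (h j) = gs j (x j))"
proof -
  have inj: "inj_on h {..<l}" and im: "h ` {..<l} = {..<l}" using Bij_L[OF h] by auto
  have e: "wr_elt l D gs h x = (\<lambda>i\<in>{..<l}. gs (inv_into {..<l} h i) (x (inv_into {..<l} h i)))"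
    using x by (simp add: wr_elt_def)
  show ?thesis
  proof
    assume "wr_elt l D gs h x = y"
    then show "y \<in> extensional {..<l} \<and> (\<forall>j<l. y (h j) = gs j (x j))"
      using e inj im by (auto simp: inv_into_f_f)
  next
    assume A: "y \<in> extensional {..<l} \<and> (\<forall>j<l. y (h j) = gs j (x j))"
    show "wr_elt l D gs h x = y"
    proof (rule extensionalityI[of _ "{..<l}"])
      show "wr_elt l D gs h x \<in> extensional {..<l}" using e by simp
      show "y \<in> extensional {..<l}" using A by simp
      fix i assume i: "i \<in> {..<l}"
      then have ii: "inv_into {..<l} h i \<in> {..<l}" "h (inv_into {..<l} h i) = i"
        using inv_into_L[OF im i] by auto
      define j where "j = inv_into {..<l} h i"
      have "wr_elt l D gs h x i = gs j (x j)" using e i j_def by simp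
      also have "\<dots> = y (h j)" using A ii j_def by auto
      finally show "wr_elt l D gs h x i = y i" using ii j_def by simp
    qed
  qed
qed

lemma wr_app:
  assumes "x \<in> Omega l D" "h \<in> Bij {..<l}" "j < l"
  shows "wr_elt l D gs h x (h j) = gs j (x j)"
  using wr_char[OF assms(1,2), of gs "wr_elt l D gs h x"] assms(3) by simp

lemma wr_closed_pt:
  assumes x: "x \<in> Omega l D" and gs: "gs \<in> PiE {..<l} (\<lambda>_. Bij D)" and h: "h \<in> Bij {..<l}"
  shows "wr_elt l D gs h x \<in> Omega l D"
proof -
  have im: "h ` {..<l} = {..<l}" using Bij_L[OF h] by auto
  { fix i assume i: "i < l"
    then have ii: "inv_into {..<l} h i \<in> {..<l}" using im by (metis inv_into_into lessThan_iff)
    then have "x (inv_into {..<l} h i) \<in> D" using x by (auto simp: Omega_def)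
    moreover have "gs (inv_into {..<l} h i) \<in> Bij D" using gs ii by auto
    ultimately have "gs (inv_into {..<l} h i) (x (inv_into {..<l} h i)) \<in> D"
      using Bij_imp_funcset by blast }
  then show ?thesis using x by (auto simp: wr_elt_def Omega_def)
qed

lemma Bij_PiE: "gs \<in> PiE {..<l} (\<lambda>_. Bij D) \<Longrightarrow> j < l \<Longrightarrow> gs j \<in> Bij D"
  by (simp add: PiE_iff)

lemma Bij_D: "f \<in> Bij D \<Longrightarrow> inj_on f D \<and> f ` D = D \<and> f \<in> extensional D"
  by (simp add: Bij_def bij_betw_def)

lemma Omega_D: "x \<in> Omega l D \<Longrightarrow> j < l \<Longrightarrow> x j \<in> D"
  by (simp add: Omega_def PiE_iff)

lemma Omega_ext: "x \<in> Omega l D \<Longrightarrow> x \<in> extensional {..<l}"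
  by (simp add: Omega_def PiE_iff)

lemma wr_Bij:
  assumes gs: "gs \<in> PiE {..<l} (\<lambda>_. Bij D)" and h: "h \<in> Bij {..<l}"
  shows "wr_elt l D gs h \<in> Bij (Omega l D)"
proof -
  let ?w = "wr_elt l D gs h"
  have ext: "?w \<in> extensional (Omega l D)" unfolding wr_elt_def by (rule restrict_extensional)
  have inj: "inj_on ?w (Omega l D)"
  proof (rule inj_onI)
    fix x x' assume x: "x \<in> Omega l D" and x': "x' \<in> Omega l D" and eq: "?w x = ?w x'"
    show "x = x'"
    proof (rule extensionalityI[of _ "{..<l}"])
      show "x \<in> extensional {..<l}" "x' \<in> extensional {..<l}" using Omega_ext[OF x] Omega_ext[OF x'] by auto
      fix j assume j: "j \<in> {..<l}"
      then have j': "j < l" by simp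
      have "gs j (x j) = ?w x (h j)" using wr_app[OF x h j'] by simp
      also have "\<dots> = ?w x' (h j)" using eq by simp
      also have "\<dots> = gs j (x' j)" using wr_app[OF x' h j'] by simp
      finally have "gs j (x j) = gs j (x' j)" .
      moreover have "inj_on (gs j) D" using Bij_D[OF Bij_PiE[OF gs j']] by simp
      moreover have "x j \<in> D" "x' j \<in> D" using Omega_D[OF x j'] Omega_D[OF x' j'] by auto
      ultimately show "x j = x' j" by (meson inj_onD)
    qed
  qed
  have sur: "Omega l D \<subseteq> ?w ` Omega l D"
  proof
    fix y assume y: "y \<in> Omega l D"
    define x where "x = (\<lambda>j\<in>{..<l}. inv_into D (gs j) (y (h j)))"
    have hj: "\<And>j. j < l \<Longrightarrow> h j < l" using Bij_L[OF h] by blast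
    have gsj: "\<And>j. j < l \<Longrightarrow> gs j ` D = D" using Bij_D[OF Bij_PiE[OF gs]] by blast
    have yhj: "\<And>j. j < l \<Longrightarrow> y (h j) \<in> D" using Omega_D[OF y] hj by blast
    have xO: "x \<in> Omega l D"
      unfolding Omega_def x_def PiE_iff
    proof (intro conjI ballI)
      fix j assume "j \<in> {..<l}"
      then have j: "j < l" by simp
      show "(\<lambda>j\<in>{..<l}. inv_into D (gs j) (y (h j))) j \<in> D"
        using j gsj[OF j] yhj[OF j] by (simp add: inv_into_into)
    qed simp
    have "?w x = y"
      unfolding wr_char[OF xO h]
    proof (intro conjI allI impI)
      show "y \<in> extensional {..<l}" using y by (rule Omega_ext)
      fix j assume j: "j < l"
      have "x j = inv_into D (gs j) (y (h j))" using j x_def by simp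
      then show "y (h j) = gs j (x j)" using gsj[OF j] yhj[OF j] by (simp add: f_inv_into_f)
    qed
    then show "y \<in> ?w ` Omega l D" using xO by blast
  qed
  have "?w ` Omega l D \<subseteq> Omega l D" using wr_closed_pt[OF _ gs h] by blast
  then have "?w ` Omega l D = Omega l D" using sur by blast
  then show ?thesis using inj ext unfolding Bij_def bij_betw_def by blast
qed

lemma BG_carrier: "carrier (BijGroup S) = Bij S" by (simp add: BijGroup_def)
lemma BG_mult: "a \<in> Bij S \<Longrightarrow> b \<in> Bij S \<Longrightarrow> a \<otimes>\<^bsub>BijGroup S\<^esub> b = compose S a b"
  by (simp add: BijGroup_def)
lemma BG_one: "\<one>\<^bsub>BijGroup S\<^esub> = (\<lambda>x\<in>S. x)" by (simp add: BijGroup_def)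
lemma BG_group: "group (BijGroup S)" by (rule group_BijGroup)

lemma BG_mult_Bij: "a \<in> Bij S \<Longrightarrow> b \<in> Bij S \<Longrightarrow> a \<otimes>\<^bsub>BijGroup S\<^esub> b \<in> Bij S"
  by (simp add: BG_mult compose_Bij)

lemma BG_mult_app: "a \<in> Bij S \<Longrightarrow> b \<in> Bij S \<Longrightarrow> x \<in> S \<Longrightarrow> (a \<otimes>\<^bsub>BijGroup S\<^esub> b) x = a (b x)"
  by (simp add: BG_mult compose_eq)

lemma wr_mult:
  assumes gs: "gs \<in> PiE {..<l} (\<lambda>_. Bij D)" and h: "h \<in> Bij {..<l}"
    and gs': "gs' \<in> PiE {..<l} (\<lambda>_. Bij D)" and h': "h' \<in> Bij {..<l}"
  shows "wr_elt l D gs h \<otimes>\<^bsub>BijGroup (Omega l D)\<^esub> wr_elt l D gs' h'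
       = wr_elt l D (\<lambda>j\<in>{..<l}. gs (h' j) \<otimes>\<^bsub>BijGroup D\<^esub> gs' j) (h \<otimes>\<^bsub>BijGroup {..<l}\<^esub> h')"
proof -
  let ?w = "wr_elt l D gs h" and ?w' = "wr_elt l D gs' h'"
  let ?gs = "\<lambda>j\<in>{..<l}. gs (h' j) \<otimes>\<^bsub>BijGroup D\<^esub> gs' j"
  let ?h = "h \<otimes>\<^bsub>BijGroup {..<l}\<^esub> h'"
  have hh: "?h \<in> Bij {..<l}" using BG_mult_Bij[OF h h'] .
  have h'j: "\<And>j. j < l \<Longrightarrow> h' j < l" using Bij_L[OF h'] by blast
  have gsgs: "\<And>j. j < l \<Longrightarrow> gs (h' j) \<in> Bij D \<and> gs' j \<in> Bij D"
    using Bij_PiE[OF gs] Bij_PiE[OF gs'] h'j by blast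
  have LHS: "?w \<otimes>\<^bsub>BijGroup (Omega l D)\<^esub> ?w' = compose (Omega l D) ?w ?w'"
    using BG_mult[OF wr_Bij[OF gs h] wr_Bij[OF gs' h']] .
  show ?thesis unfolding LHS
  proof (rule extensionalityI[of _ "Omega l D"])
    show "compose (Omega l D) ?w ?w' \<in> extensional (Omega l D)" by (simp add: compose_def)
    show "wr_elt l D ?gs ?h \<in> extensional (Omega l D)" unfolding wr_elt_def by (rule restrict_extensional)
    fix x assume x: "x \<in> Omega l D"
    have x': "?w' x \<in> Omega l D" using wr_closed_pt[OF x gs' h'] .
    have x'': "?w (?w' x) \<in> Omega l D" using wr_closed_pt[OF x' gs h] .
    have "wr_elt l D ?gs ?h x = ?w (?w' x)"
      unfolding wr_char[OF x hh]
    proof (intro conjI allI impI)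
      show "?w (?w' x) \<in> extensional {..<l}" using Omega_ext[OF x''] .
      fix j assume j: "j < l"
      have "?h j = h (h' j)" using BG_mult_app[OF h h'] j by simp
      then have "?w (?w' x) (?h j) = gs (h' j) (?w' x (h' j))" using wr_app[OF x' h h'j[OF j]] by simp
      also have "\<dots> = gs (h' j) (gs' j (x j))" using wr_app[OF x h' j] by simp
      also have "\<dots> = ?gs j (x j)" using j gsgs[OF j] BG_mult_app[of "gs (h' j)" D "gs' j" "x j"] Omega_D[OF x j] by simp
      finally show "?w (?w' x) (?h j) = ?gs j (x j)" .
    qed
    then show "compose (Omega l D) ?w ?w' x = wr_elt l D ?gs ?h x" using x by (simp add: compose_eq)
  qed
qed

lemma wr_one: "wr_elt l D (\<lambda>j\<in>{..<l}. \<one>\<^bsub>BijGroup D\<^esub>) \<one>\<^bsub>BijGroup {..<l}\<^esub> = \<one>\<^bsub>BijGroup (Omega l D)\<^esub>"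
proof (rule extensionalityI[of _ "Omega l D"])
  show "wr_elt l D (\<lambda>j\<in>{..<l}. \<one>\<^bsub>BijGroup D\<^esub>) \<one>\<^bsub>BijGroup {..<l}\<^esub> \<in> extensional (Omega l D)"
    unfolding wr_elt_def by (rule restrict_extensional)
  show "\<one>\<^bsub>BijGroup (Omega l D)\<^esub> \<in> extensional (Omega l D)" by (simp add: BG_one)
  fix x assume x: "x \<in> Omega l D"
  have o: "\<one>\<^bsub>BijGroup {..<l}\<^esub> \<in> Bij {..<l}" by (simp add: BG_one id_Bij)
  have "wr_elt l D (\<lambda>j\<in>{..<l}. \<one>\<^bsub>BijGroup D\<^esub>) \<one>\<^bsub>BijGroup {..<l}\<^esub> x = x"
    unfolding wr_char[OF x o] using Omega_ext[OF x] Omega_D[OF x] by (simp add: BG_one)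
  then show "wr_elt l D (\<lambda>j\<in>{..<l}. \<one>\<^bsub>BijGroup D\<^esub>) \<one>\<^bsub>BijGroup {..<l}\<^esub> x = \<one>\<^bsub>BijGroup (Omega l D)\<^esub> x"
    using x by (simp add: BG_one)
qed

lemma BG_inv_Bij: "a \<in> Bij S \<Longrightarrow> inv\<^bsub>BijGroup S\<^esub> a \<in> Bij S"
  using group.inv_closed[OF BG_group, of a S] by (simp add: BG_carrier)

lemma wr_inv:
  assumes gs: "gs \<in> PiE {..<l} (\<lambda>_. Bij D)" and h: "h \<in> Bij {..<l}"
  shows "inv\<^bsub>BijGroup (Omega l D)\<^esub> (wr_elt l D gs h)
       = wr_elt l D (\<lambda>j\<in>{..<l}. inv\<^bsub>BijGroup D\<^esub> (gs ((inv\<^bsub>BijGroup {..<l}\<^esub> h) j))) (inv\<^bsub>BijGroup {..<l}\<^esub> h)"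
proof -
  let ?ih = "inv\<^bsub>BijGroup {..<l}\<^esub> h"
  let ?gi = "\<lambda>j\<in>{..<l}. inv\<^bsub>BijGroup D\<^esub> (gs (?ih j))"
  have ih: "?ih \<in> Bij {..<l}" using BG_inv_Bij[OF h] .
  have ihj: "\<And>j. j < l \<Longrightarrow> ?ih j < l" using Bij_L[OF ih] by blast
  have gi: "?gi \<in> PiE {..<l} (\<lambda>_. Bij D)"
    by (simp add: PiE_iff BG_inv_Bij Bij_PiE[OF gs] ihj)
  have l1: "?ih \<otimes>\<^bsub>BijGroup {..<l}\<^esub> h = \<one>\<^bsub>BijGroup {..<l}\<^esub>"
    using group.l_inv[OF BG_group, of h "{..<l}"] h by (simp add: BG_carrier)
  have ihh: "\<And>j. j < l \<Longrightarrow> ?ih (h j) = j"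
  proof -
    fix j assume j: "j < l"
    have "?ih (h j) = (?ih \<otimes>\<^bsub>BijGroup {..<l}\<^esub> h) j" using BG_mult_app[OF ih h, of j] j by simp
    then show "?ih (h j) = j" using l1 j by (simp add: BG_one)
  qed
  have hj: "\<And>j. j < l \<Longrightarrow> h j < l" using Bij_L[OF h] by blast
  have comp: "(\<lambda>j\<in>{..<l}. ?gi (h j) \<otimes>\<^bsub>BijGroup D\<^esub> gs j) = (\<lambda>j\<in>{..<l}. \<one>\<^bsub>BijGroup D\<^esub>)"
  proof (rule restrict_ext)
    fix j assume "j \<in> {..<l}"
    then have j: "j < l" by simp
    have "?gi (h j) = inv\<^bsub>BijGroup D\<^esub> (gs j)" using hj[OF j] ihh[OF j] by simp
    then show "?gi (h j) \<otimes>\<^bsub>BijGroup D\<^esub> gs j = \<one>\<^bsub>BijGroup D\<^esub>"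
      using group.l_inv[OF BG_group, of "gs j" D] Bij_PiE[OF gs j] by (simp add: BG_carrier)
  qed
  have "wr_elt l D ?gi ?ih \<otimes>\<^bsub>BijGroup (Omega l D)\<^esub> wr_elt l D gs h = \<one>\<^bsub>BijGroup (Omega l D)\<^esub>"
    using wr_mult[OF gi ih gs h] comp l1 wr_one by simp
  then show ?thesis
    using group.inv_equality[OF BG_group] wr_Bij[OF gs h] wr_Bij[OF gi ih] by (simp add: BG_carrier)
qed

lemma two_elems: assumes "card D \<ge> 2" obtains a b where "a \<in> D" "b \<in> D" "a \<noteq> b"
proof -
  have "card D > 0" using assms by simp
  then obtain a where a: "a \<in> D" by fastforce
  have "finite D" using assms by (metis card.infinite not_numeral_le_zero)
  then have "card (D - {a}) \<ge> 1" using assms a by simp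
  then have "D - {a} \<noteq> {}" by (metis card.empty not_one_le_zero)
  then obtain b where "b \<in> D - {a}" by blast
  then show ?thesis using a that by blast
qed

lemma wr_uniq:
  assumes D: "card D \<ge> 2"
    and gs: "gs \<in> PiE {..<l} (\<lambda>_. Bij D)" and h: "h \<in> Bij {..<l}"
    and gs': "gs' \<in> PiE {..<l} (\<lambda>_. Bij D)" and h': "h' \<in> Bij {..<l}"
    and eq: "wr_elt l D gs h = wr_elt l D gs' h'"
  shows "h = h' \<and> gs = gs'"
proof -
  obtain a b where ab: "a \<in> D" "b \<in> D" "a \<noteq> b" using two_elems[OF D] by blast
  define xc where "xc = (\<lambda>j c. \<lambda>k\<in>{..<l}. if k = j then c else a)"
  have xcO: "\<And>j c. c \<in> D \<Longrightarrow> xc j c \<in> Omega l D" using ab by (simp add: xc_def Omega_def PiE_iff)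
  have hh: "\<forall>j<l. h j = h' j"
  proof (intro allI impI, rule ccontr)
    fix j assume j: "j < l" and ne: "h j \<noteq> h' j"
    have "h j \<in> h' ` {..<l}" using Bij_L[OF h] Bij_L[OF h'] j by blast
    then obtain j' where j': "j' < l" "h' j' = h j" by auto
    have jj: "j' \<noteq> j" using ne j' by auto
    have e1: "\<And>c. c \<in> D \<Longrightarrow> wr_elt l D gs h (xc j c) (h j) = gs j c"
      using wr_app[OF xcO h j] j by (simp add: xc_def)
    have e2: "\<And>c. c \<in> D \<Longrightarrow> wr_elt l D gs h (xc j c) (h j) = gs' j' a"
      using wr_app[OF xcO h' j'(1)] j' jj eq by (simp add: xc_def)
    have "gs j a = gs j b" using e1 e2 ab by metis
    moreover have "inj_on (gs j) D" using Bij_D[OF Bij_PiE[OF gs j]] by simp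
    ultimately show False using ab by (meson inj_onD)
  qed
  have "h = h'"
    by (rule extensionalityI[of _ "{..<l}"]) (use h h' hh in \<open>auto simp: Bij_def\<close>)
  moreover have "gs = gs'"
  proof (rule extensionalityI[of _ "{..<l}"])
    show "gs \<in> extensional {..<l}" "gs' \<in> extensional {..<l}" using gs gs' by (auto simp: PiE_iff)
    fix j assume "j \<in> {..<l}"
    then have j: "j < l" by simp
    show "gs j = gs' j"
    proof (rule extensionalityI[of _ D])
      show "gs j \<in> extensional D" "gs' j \<in> extensional D"
        using Bij_D[OF Bij_PiE[OF gs j]] Bij_D[OF Bij_PiE[OF gs' j]] by auto
      fix c assume c: "c \<in> D"
      have xO: "(\<lambda>k\<in>{..<l}. c) \<in> Omega l D" using c by (simp add: Omega_def)
      have "gs j c = wr_elt l D gs h (\<lambda>k\<in>{..<l}. c) (h j)" using wr_app[OF xO h j] j by simp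
      also have "\<dots> = gs' j c" using wr_app[OF xO h' j] j eq hh by simp
      finally show "gs j c = gs' j c" .
    qed
  qed
  ultimately show ?thesis by simp
qed

lemma wr_pi_eq:
  assumes D: "card D \<ge> 2"
    and gs: "gs \<in> PiE {..<l} (\<lambda>_. Bij D)" and h: "h \<in> Bij {..<l}"
  shows "wr_pi l D (wr_elt l D gs h) = h"
  unfolding wr_pi_def
proof (rule the_equality)
  show "h \<in> carrier (BijGroup {..<l}) \<and> (\<exists>gsa\<in>{..<l} \<rightarrow>\<^sub>E carrier (BijGroup D). wr_elt l D gs h = wr_elt l D gsa h)"
    using gs h by (auto simp: BG_carrier)
  fix h2 assume "h2 \<in> carrier (BijGroup {..<l}) \<and> (\<exists>gsa\<in>{..<l} \<rightarrow>\<^sub>E carrier (BijGroup D). wr_elt l D gs h = wr_elt l D gsa h2)"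
  then show "h2 = h" using wr_uniq[OF D gs h] by (auto simp: BG_carrier)
qed

lemma fact_split:
  fixes p :: nat assumes p: "Factorial_Ring.prime p"
  shows "\<exists>c. fact n = p ^ (n div p) * fact (n div p) * c \<and> \<not> p dvd c"
proof (induction n)
  case 0
  have "\<not> p dvd 1" using prime_gt_1_nat[OF p] by simp
  then show ?case by (intro exI[of _ 1]) simp
next
  case (Suc n)
  then obtain c where c: "fact n = p ^ (n div p) * fact (n div p) * c" "\<not> p dvd c" by blast
  have p1: "p > 1" using prime_gt_1_nat[OF p] .
  show ?case
  proof (cases "p dvd Suc n")
    case True
    then have m: "Suc n mod p = 0" by simp
    then have q: "Suc n div p = Suc (n div p)" by (simp add: div_Suc)
    have "p * (Suc n div p) = Suc n" using True by (rule dvd_mult_div_cancel)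
    then have sn: "Suc n = p * Suc (n div p)" using q by simp
    have "fact (Suc n) = Suc n * fact n" by simp
    also have "\<dots> = p * Suc (n div p) * (p ^ (n div p) * fact (n div p) * c)" using sn c by simp
    also have "\<dots> = p ^ Suc (n div p) * (Suc (n div p) * fact (n div p)) * c" by (simp add: algebra_simps)
    also have "\<dots> = p ^ (Suc n div p) * fact (Suc n div p) * c" using q by simp
    finally show ?thesis using c by blast
  next
    case False
    then have m: "Suc n mod p \<noteq> 0" by (simp add: dvd_eq_mod_eq_0)
    then have q: "Suc n div p = n div p" by (simp add: div_Suc)
    have "fact (Suc n) = p ^ (Suc n div p) * fact (Suc n div p) * (Suc n * c)"
      using c q by (simp add: algebra_simps)
    moreover have "\<not> p dvd (Suc n * c)" using False c(2) prime_dvd_mult_iff[OF p, of "Suc n" c] by blast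
    ultimately show ?thesis by blast
  qed
qed

lemma mult_fact_less:
  fixes p :: nat assumes p: "Factorial_Ring.prime p"
  shows "n \<ge> 1 \<Longrightarrow> multiplicity p (fact n :: nat) < n"
proof (induction n rule: less_induct)
  case (less n)
  obtain c where c: "fact n = p ^ (n div p) * fact (n div p) * c" "\<not> p dvd c" using fact_split[OF p] by blast
  have pe: "prime_elem p" using p by simp
  have c0: "c \<noteq> 0" using c(2) by (metis dvd_0_right)
  have p0: "p \<noteq> 0" "\<not> is_unit p" using p by auto
  have "multiplicity p (fact n :: nat) = multiplicity p (p ^ (n div p)) + multiplicity p (fact (n div p) :: nat) + multiplicity p c"
    unfolding c(1) using pe c0 p0 by (simp add: prime_elem_multiplicity_mult_distrib)
  also have "\<dots> = n div p + multiplicity p (fact (n div p) :: nat)"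
    using p0 c(2) by (simp add: multiplicity_same_power not_dvd_imp_multiplicity_0)
  finally have eq: "multiplicity p (fact n :: nat) = n div p + multiplicity p (fact (n div p) :: nat)" .
  have p1: "p \<ge> 2" using prime_ge_2_nat[OF p] .
  show ?case
  proof (cases "n div p = 0")
    case True
    then show ?thesis using eq less.prems by simp
  next
    case False
    have lt: "n div p < n" using less.prems p1 by (simp add: div_less_dividend)
    have "multiplicity p (fact (n div p) :: nat) < n div p" using less.IH[OF lt] False by simp
    moreover have "2 * (n div p) \<le> n"
    proof -
      have "2 * (n div p) \<le> p * (n div p)" using p1 by simp
      also have "\<dots> \<le> n" using div_times_less_eq_dividend[of n p] by (simp add: mult.commute)
      finally show ?thesis .
    qed
    ultimately show ?thesis using eq by simp
  qed
qed

lemma no_pow_dvd_fact: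
  fixes d :: nat assumes d: "d \<ge> 2" and n: "n \<ge> 1"
  shows "\<not> d ^ n dvd fact n"
proof
  assume A: "d ^ n dvd fact n"
  obtain p where p: "Factorial_Ring.prime p" "p dvd d" using prime_factor_nat[of d] d by auto
  have "p ^ n dvd d ^ n" using p by (simp add: dvd_power_same)
  then have "p ^ n dvd fact n" using A dvd_trans by blast
  moreover have "(fact n :: nat) \<noteq> 0" "\<not> is_unit p" using p by auto
  ultimately have "n \<le> multiplicity p (fact n :: nat)" using multiplicity_geI by blast
  then show False using mult_fact_less[OF p(1) n] by simp
qed

lemma card_Bij: assumes "finite S" shows "card (Bij S) = fact (card S)"
proof -
  have "bij_betw (\<lambda>p. restrict p S) {p. p permutes S} (Bij S)"
  proof (rule bij_betw_imageI)
    show "inj_on (\<lambda>p. restrict p S) {p. p permutes S}"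
    proof (rule inj_onI)
      fix p q assume "p \<in> {p. p permutes S}" "q \<in> {p. p permutes S}" and e: "restrict p S = restrict q S"
      then have pq: "p permutes S" "q permutes S" by auto
      show "p = q"
      proof
        fix x show "p x = q x"
        proof (cases "x \<in> S")
          case True then show ?thesis using e by (metis restrict_apply')
        next
          case False then show ?thesis using pq by (simp add: permutes_not_in)
        qed
      qed
    qed
    show "(\<lambda>p. restrict p S) ` {p. p permutes S} = Bij S"
    proof
      show "(\<lambda>p. restrict p S) ` {p. p permutes S} \<subseteq> Bij S"
      proof
        fix f assume "f \<in> (\<lambda>p. restrict p S) ` {p. p permutes S}"
        then obtain p where p: "p permutes S" "f = restrict p S" by auto
        have "bij_betw p S S" using p(1) by (rule permutes_imp_bij)
        moreover have "bij_betw f S S \<longleftrightarrow> bij_betw p S S" using p(2) by (intro bij_betw_cong) simp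
        ultimately have "bij_betw f S S" by blast
        then show "f \<in> Bij S" using p(2) by (simp add: Bij_def)
      qed
      show "Bij S \<subseteq> (\<lambda>p. restrict p S) ` {p. p permutes S}"
      proof
        fix f assume f: "f \<in> Bij S"
        define p where "p = (\<lambda>x. if x \<in> S then f x else x)"
        have "bij_betw f S S" using f by (simp add: Bij_def)
        moreover have "bij_betw p S S \<longleftrightarrow> bij_betw f S S" by (intro bij_betw_cong) (simp add: p_def)
        ultimately have "bij_betw p S S" by blast
        then have "p permutes S" by (rule bij_imp_permutes) (simp add: p_def)
        moreover have "restrict p S = f"
        proof (rule extensionalityI[of _ S])
          show "restrict p S \<in> extensional S" by (rule restrict_extensional)
          show "f \<in> extensional S" using f by (rule Bij_imp_extensional)
          fix x assume "x \<in> S" then show "restrict p S x = f x" by (simp add: p_def)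
        qed
        ultimately show "f \<in> (\<lambda>p. restrict p S) ` {p. p permutes S}" using image_eqI[of f "\<lambda>p. restrict p S" p] by blast
      qed
    qed
  qed
  then have "card (Bij S) = card {p. p permutes S}" by (simp add: bij_betw_same_card)
  then show ?thesis using card_permutations[OF refl assms] by simp
qed

lemma Bij_finite: "finite S \<Longrightarrow> finite (Bij S)"
proof -
  assume f: "finite S"
  have "Bij S \<subseteq> PiE S (\<lambda>_. S)"
  proof
    fix f assume "f \<in> Bij S"
    then have "f \<in> S \<rightarrow> S" "f \<in> extensional S" using Bij_imp_funcset Bij_imp_extensional by blast+
    then show "f \<in> PiE S (\<lambda>_. S)" unfolding PiE_def by blast
  qed
  moreover have "finite (PiE S (\<lambda>_. S))" using f by (simp add: finite_PiE)
  ultimately show ?thesis by (rule finite_subset)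
qed

lemma card_Omega: "card (Omega l D) = card D ^ l"
  unfolding Omega_def by (simp add: card_PiE)

lemma compE:
  assumes "k \<in> component l D G 0"
  shows "\<exists>gs h. gs \<in> PiE {..<l} (\<lambda>_. Bij D) \<and> h \<in> Bij {..<l} \<and> h 0 = 0 \<and> wr_elt l D gs h \<in> G \<and> k = gs 0"
  using assms unfolding component_def BG_carrier by blast

lemma compI:
  assumes "gs \<in> PiE {..<l} (\<lambda>_. Bij D)" "h \<in> Bij {..<l}" "h 0 = 0" "wr_elt l D gs h \<in> G"
  shows "gs 0 \<in> component l D G 0"
  using assms unfolding component_def BG_carrier by blast

lemma BG_inv_app: "h \<in> Bij S \<Longrightarrow> x \<in> S \<Longrightarrow> (inv\<^bsub>BijGroup S\<^esub> h) (h x) = x"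
proof -
  assume h: "h \<in> Bij S" and x: "x \<in> S"
  have "(inv\<^bsub>BijGroup S\<^esub> h) (h x) = (inv\<^bsub>BijGroup S\<^esub> h \<otimes>\<^bsub>BijGroup S\<^esub> h) x"
    using BG_mult_app[OF BG_inv_Bij[OF h] h x] by simp
  also have "\<dots> = x" using group.l_inv[OF BG_group, of h S] h x by (simp add: BG_carrier BG_one)
  finally show ?thesis .
qed

lemma BG_app_inv: "h \<in> Bij S \<Longrightarrow> x \<in> S \<Longrightarrow> h ((inv\<^bsub>BijGroup S\<^esub> h) x) = x"
proof -
  assume h: "h \<in> Bij S" and x: "x \<in> S"
  have "h ((inv\<^bsub>BijGroup S\<^esub> h) x) = (h \<otimes>\<^bsub>BijGroup S\<^esub> inv\<^bsub>BijGroup S\<^esub> h) x"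
    using BG_mult_app[OF h BG_inv_Bij[OF h] x] by simp
  also have "\<dots> = x" using group.r_inv[OF BG_group, of h S] h x by (simp add: BG_carrier BG_one)
  finally show ?thesis .
qed

lemma Bij_app: "f \<in> Bij S \<Longrightarrow> x \<in> S \<Longrightarrow> f x \<in> S"
  using Bij_imp_funcset by blast

theorem lemma3p3:
  fixes D :: "'a set" and l :: nat
    and G M :: "((nat \<Rightarrow> 'a) \<Rightarrow> (nat \<Rightarrow> 'a)) set"
    and E :: "(nat \<Rightarrow> 'a) \<Rightarrow> (nat \<Rightarrow> 'a) \<Rightarrow> bool"
    and a1 :: 'a and \<beta> :: "nat \<Rightarrow> 'a"
  assumes D: "finite D" "card D \<ge> 2"
    and l: "l \<ge> 2"
    and G_sub: "subgroup G (BijGroup (Omega l D))" "G \<subseteq> Wr l D"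
    and M_min: "minimal_normal (subgrp (BijGroup (Omega l D)) G) M"
    and M_trans: "\<forall>x\<in>Omega l D. \<forall>y\<in>Omega l D. \<exists>m\<in>M. m x = y"
    and M_prod: "\<exists>k Ts. k \<ge> 1 \<and> internal_direct_product (BijGroup (Omega l D)) M k Ts
        \<and> (\<forall>i<k. simple_group (subgrp (BijGroup (Omega l D)) (Ts i))
               \<and> finite (Ts i)
               \<and> subgrp (BijGroup (Omega l D)) (Ts i) \<cong> subgrp (BijGroup (Omega l D)) (Ts 0))"
    and graph: "graph_on (Omega l D) E" "connected_graph (Omega l D) E"
    and aut: "G \<subseteq> graph_aut (Omega l D) E"
    and arc: "arc_transitive E M"
    and top_trans: "\<forall>i<l. \<forall>j<l. \<exists>h\<in>wr_pi l D ` G. h i = j"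
    and in_wreath: "G \<subseteq> wreath l D (component l D G 0) (wr_pi l D ` G)"
    and a1: "a1 \<in> D"
    and \<beta>: "E (\<lambda>i\<in>{..<l}. a1) \<beta>"
  shows "\<exists>h \<in> base_power l D {k \<in> component l D G 0. k a1 = a1}.
           h \<beta> = (\<lambda>i\<in>{..<l}. \<beta> 0)
         \<and> image_graph h E (\<lambda>i\<in>{..<l}. a1) (\<lambda>i\<in>{..<l}. \<beta> 0)
         \<and> conj_set (BijGroup (Omega l D)) G h \<subseteq> graph_aut (Omega l D) (image_graph h E)
         \<and> conj_set (BijGroup (Omega l D)) G h
             \<subseteq> wreath l D (component l D G 0) (wr_pi l D ` G)"
proof -
  let ?O = "Omega l D"
  let ?S = "BijGroup (Omega l D)"
  let ?SL = "BijGroup {..<l}"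
  let ?SD = "BijGroup D"
  define K where "K = component l D G 0"
  define pi where "pi = wr_pi l D"
  have l0: "0 < l" using l by simp
  have grpS: "group ?S" by (rule BG_group)
  have GS: "G \<subseteq> Bij ?O" using subgroup.subset[OF G_sub(1)] by (simp add: BG_carrier)
  have KB: "K \<subseteq> Bij D"
  proof
    fix k assume "k \<in> K"
    then obtain gs h where "gs \<in> PiE {..<l} (\<lambda>_. Bij D)" "k = gs 0" using compE unfolding K_def by blast
    then show "k \<in> Bij D" using l0 Bij_PiE by blast
  qed
  have PiK: "\<And>gs. gs \<in> PiE {..<l} (\<lambda>_. K) \<Longrightarrow> gs \<in> PiE {..<l} (\<lambda>_. Bij D)"
    using PiE_mono[of "{..<l}" "\<lambda>_. K" "\<lambda>_. Bij D"] KB by blast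
  have Wdec: "\<And>g. g \<in> G \<Longrightarrow> \<exists>gs h. gs \<in> PiE {..<l} (\<lambda>_. Bij D) \<and> h \<in> Bij {..<l} \<and> g = wr_elt l D gs h"
  proof -
    fix g assume "g \<in> G"
    then have "g \<in> Wr l D" using G_sub(2) by blast
    then show "\<exists>gs h. gs \<in> PiE {..<l} (\<lambda>_. Bij D) \<and> h \<in> Bij {..<l} \<and> g = wr_elt l D gs h"
      unfolding Wr_def BG_carrier by blast
  qed
  have piB: "\<And>g. g \<in> G \<Longrightarrow> pi g \<in> Bij {..<l}"
  proof -
    fix g assume "g \<in> G"
    then obtain gs h where "gs \<in> PiE {..<l} (\<lambda>_. Bij D)" "h \<in> Bij {..<l}" "g = wr_elt l D gs h" using Wdec by blast
    then show "pi g \<in> Bij {..<l}" using wr_pi_eq[OF D(2)] pi_def by simp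
  qed
  have dec: "\<And>g. g \<in> G \<Longrightarrow> \<exists>gs \<in> PiE {..<l} (\<lambda>_. K). g = wr_elt l D gs (pi g)"
  proof -
    fix g assume g: "g \<in> G"
    then have "g \<in> wreath l D K (pi ` G)" using in_wreath K_def pi_def by blast
    then obtain gs h where gh: "g = wr_elt l D gs h" "gs \<in> PiE {..<l} (\<lambda>_. K)" "h \<in> pi ` G"
      unfolding wreath_def by blast
    have "h \<in> Bij {..<l}" using gh(3) piB by blast
    then have "pi g = h" using wr_pi_eq[OF D(2) PiK[OF gh(2)]] gh(1) pi_def by simp
    then show "\<exists>gs \<in> PiE {..<l} (\<lambda>_. K). g = wr_elt l D gs (pi g)" using gh by blast
  qed
  have Gmul: "\<And>a b. a \<in> G \<Longrightarrow> b \<in> G \<Longrightarrow> a \<otimes>\<^bsub>?S\<^esub> b \<in> G"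
    using subgroup.m_closed[OF G_sub(1)] by blast
  have Ginv: "\<And>a. a \<in> G \<Longrightarrow> inv\<^bsub>?S\<^esub> a \<in> G"
    using subgroup.m_inv_closed[OF G_sub(1)] by blast
  have Kmul: "\<And>k1 k2. k1 \<in> K \<Longrightarrow> k2 \<in> K \<Longrightarrow> k1 \<otimes>\<^bsub>?SD\<^esub> k2 \<in> K"
  proof -
    fix k1 k2 assume "k1 \<in> K" "k2 \<in> K"
    then obtain gs1 h1 gs2 h2 where 1: "gs1 \<in> PiE {..<l} (\<lambda>_. Bij D)" "h1 \<in> Bij {..<l}" "h1 0 = 0" "wr_elt l D gs1 h1 \<in> G" "k1 = gs1 0"
      and 2: "gs2 \<in> PiE {..<l} (\<lambda>_. Bij D)" "h2 \<in> Bij {..<l}" "h2 0 = 0" "wr_elt l D gs2 h2 \<in> G" "k2 = gs2 0"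
      using compE unfolding K_def by metis
    let ?gs = "\<lambda>j\<in>{..<l}. gs1 (h2 j) \<otimes>\<^bsub>?SD\<^esub> gs2 j"
    let ?h = "h1 \<otimes>\<^bsub>?SL\<^esub> h2"
    have h2j: "\<And>j. j < l \<Longrightarrow> h2 j < l" using Bij_L[OF 2(2)] by blast
    have gsP: "?gs \<in> PiE {..<l} (\<lambda>_. Bij D)"
      by (simp add: PiE_iff BG_mult_Bij Bij_PiE[OF 1(1)] Bij_PiE[OF 2(1)] h2j)
    have hB: "?h \<in> Bij {..<l}" using BG_mult_Bij[OF 1(2) 2(2)] .
    have h0: "?h 0 = 0" using BG_mult_app[OF 1(2) 2(2), of 0] l0 1(3) 2(3) by simp
    have inG: "wr_elt l D ?gs ?h \<in> G" using wr_mult[OF 1(1,2) 2(1,2)] Gmul[OF 1(4) 2(4)] by simp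
    have "?gs 0 \<in> K" using compI[OF gsP hB h0 inG] K_def by simp
    then show "k1 \<otimes>\<^bsub>?SD\<^esub> k2 \<in> K" using l0 1(5) 2(5) 2(3) by simp
  qed
  have Kinv: "\<And>k. k \<in> K \<Longrightarrow> inv\<^bsub>?SD\<^esub> k \<in> K"
  proof -
    fix k assume "k \<in> K"
    then obtain gs h where 1: "gs \<in> PiE {..<l} (\<lambda>_. Bij D)" "h \<in> Bij {..<l}" "h 0 = 0" "wr_elt l D gs h \<in> G" "k = gs 0"
      using compE unfolding K_def by metis
    let ?ih = "inv\<^bsub>?SL\<^esub> h"
    let ?gs = "\<lambda>j\<in>{..<l}. inv\<^bsub>?SD\<^esub> (gs (?ih j))"
    have ih: "?ih \<in> Bij {..<l}" using BG_inv_Bij[OF 1(2)] .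
    have ihj: "\<And>j. j < l \<Longrightarrow> ?ih j < l" using Bij_L[OF ih] by blast
    have gsP: "?gs \<in> PiE {..<l} (\<lambda>_. Bij D)"
      by (simp add: PiE_iff BG_inv_Bij Bij_PiE[OF 1(1)] ihj)
    have ih0: "?ih 0 = 0" using BG_inv_app[OF 1(2), of 0] l0 1(3) by simp
    have inG: "wr_elt l D ?gs ?ih \<in> G" using wr_inv[OF 1(1,2)] Ginv[OF 1(4)] by simp
    have "?gs 0 \<in> K" using compI[OF gsP ih ih0 inG] K_def by simp
    then show "inv\<^bsub>?SD\<^esub> k \<in> K" using l0 1(5) ih0 by simp
  qed
  have pimul: "\<And>a b. a \<in> G \<Longrightarrow> b \<in> G \<Longrightarrow> pi (a \<otimes>\<^bsub>?S\<^esub> b) = pi a \<otimes>\<^bsub>?SL\<^esub> pi b"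
  proof -
    fix a b assume a: "a \<in> G" and b: "b \<in> G"
    obtain gsa ha where A: "gsa \<in> PiE {..<l} (\<lambda>_. Bij D)" "ha \<in> Bij {..<l}" "a = wr_elt l D gsa ha" using Wdec[OF a] by blast
    obtain gsb hb where B: "gsb \<in> PiE {..<l} (\<lambda>_. Bij D)" "hb \<in> Bij {..<l}" "b = wr_elt l D gsb hb" using Wdec[OF b] by blast
    have hbj: "\<And>j. j < l \<Longrightarrow> hb j < l" using Bij_L[OF B(2)] by blast
    have gsP: "(\<lambda>j\<in>{..<l}. gsa (hb j) \<otimes>\<^bsub>?SD\<^esub> gsb j) \<in> PiE {..<l} (\<lambda>_. Bij D)"
      by (simp add: PiE_iff BG_mult_Bij Bij_PiE[OF A(1)] Bij_PiE[OF B(1)] hbj)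
    have "pi (a \<otimes>\<^bsub>?S\<^esub> b) = ha \<otimes>\<^bsub>?SL\<^esub> hb"
      using wr_mult[OF A(1,2) B(1,2)] wr_pi_eq[OF D(2) gsP BG_mult_Bij[OF A(2) B(2)]] A(3) B(3) pi_def by simp
    moreover have "pi a = ha" "pi b = hb" using wr_pi_eq[OF D(2)] A B pi_def by auto
    ultimately show "pi (a \<otimes>\<^bsub>?S\<^esub> b) = pi a \<otimes>\<^bsub>?SL\<^esub> pi b" by simp
  qed
  let ?GG = "subgrp ?S G"
  have GG: "group ?GG" using group.subgroup_imp_group[OF grpS G_sub(1)] .
  have "pi \<in> hom ?GG ?SL"
    by (rule homI) (simp_all add: BG_carrier piB pimul)
  then have hom: "group_hom ?GG ?SL pi"
    by (intro group_hom.intro group_hom_axioms.intro GG BG_group)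
  define B where "B = kernel ?GG ?SL pi"
  have Bn: "B \<lhd> ?GG" using group_hom.normal_kernel[OF hom] B_def by simp
  have Mn: "M \<lhd> ?GG" using M_min unfolding minimal_normal_def by blast
  have Nn: "(M \<inter> B) \<lhd> ?GG"
    unfolding group.normal_inv_iff[OF GG]
  proof (intro conjI ballI)
    show "subgroup (M \<inter> B) ?GG"
      using group.subgroups_Inter_pair[OF GG] normal_imp_subgroup[OF Mn] normal_imp_subgroup[OF Bn] by blast
    fix x h assume x: "x \<in> carrier ?GG" and h: "h \<in> M \<inter> B"
    show "x \<otimes>\<^bsub>?GG\<^esub> h \<otimes>\<^bsub>?GG\<^esub> inv\<^bsub>?GG\<^esub> x \<in> M \<inter> B"
      using normal.inv_op_closed2[OF Mn x] normal.inv_op_closed2[OF Bn x] h by blast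
  qed
  have MG: "M \<subseteq> G" using normal_imp_subgroup[OF Mn] subgroup.subset by fastforce
  have dich: "M \<inter> B = {\<one>\<^bsub>?S\<^esub>} \<or> M \<inter> B = M"
    using M_min Nn unfolding minimal_normal_def by simp
  have MB: "M \<subseteq> B"
  proof (rule ccontr)
    assume "\<not> M \<subseteq> B"
    then have triv: "M \<inter> B = {\<one>\<^bsub>?S\<^esub>}" using dich by blast
    have MS: "subgroup M ?S" using group.incl_subgroup[OF grpS G_sub(1) normal_imp_subgroup[OF Mn]] .
    let ?MM = "subgrp ?S M"
    have MM: "group ?MM" using group.subgroup_imp_group[OF grpS MS] .
    have homM: "pi \<in> hom ?MM ?SL"
    proof (rule homI)
      fix x assume "x \<in> carrier ?MM" then show "pi x \<in> carrier ?SL" using MG piB by (auto simp: BG_carrier)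
    next
      fix x y assume "x \<in> carrier ?MM" "y \<in> carrier ?MM"
      then show "pi (x \<otimes>\<^bsub>?MM\<^esub> y) = pi x \<otimes>\<^bsub>?SL\<^esub> pi y" using MG pimul by auto
    qed
    have hM: "group_hom ?MM ?SL pi" by (intro group_hom.intro group_hom_axioms.intro MM BG_group homM)
    have "kernel ?MM ?SL pi = M \<inter> B"
    proof -
      have "kernel ?MM ?SL pi = {x. x \<in> M \<and> pi x = \<one>\<^bsub>?SL\<^esub>}" unfolding kernel_def by simp
      moreover have "B = {x. x \<in> G \<and> pi x = \<one>\<^bsub>?SL\<^esub>}" unfolding B_def kernel_def by simp
      ultimately show ?thesis using MG by blast
    qed
    then have ker: "kernel ?MM ?SL pi = {\<one>\<^bsub>?MM\<^esub>}" using triv by simp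
    have inj: "inj_on pi M" using group_hom.inj_iff_trivial_ker[OF hM] ker by simp
    have img: "subgroup (pi ` M) ?SL" using group_hom.img_is_subgroup[OF hM] by simp
    have "card (rcosets\<^bsub>?SL\<^esub> (pi ` M)) * card (pi ` M) = order ?SL" using group.lagrange[OF BG_group img] .
    moreover have "order ?SL = fact l" unfolding order_def BG_carrier using card_Bij[of "{..<l}"] by simp
    moreover have "card (pi ` M) = card M" using card_image[OF inj] .
    ultimately have "card (rcosets\<^bsub>?SL\<^esub> (pi ` M)) * card M = fact l" by simp
    then have d1: "card M dvd fact l" by (metis dvd_triv_right)
    have fO: "finite ?O" using D(1) unfolding Omega_def by (simp add: finite_PiE)
    have hid: "(\<lambda>m. m) \<in> hom ?MM ?S"
    proof (rule homI)
      fix x assume "x \<in> carrier ?MM" then show "x \<in> carrier ?S" using subgroup.subset[OF MS] by auto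
    qed simp
    have ga: "group_action ?MM ?O (\<lambda>m. m)"
      unfolding group_action_def by (intro group_hom.intro group_hom_axioms.intro MM BG_group hid)
    define \<alpha> where "\<alpha> = (\<lambda>i\<in>{..<l}. a1)"
    have \<alpha>O: "\<alpha> \<in> ?O" using a1 unfolding \<alpha>_def Omega_def by simp
    have orb: "orbit ?MM (\<lambda>m. m) \<alpha> = ?O"
    proof
      show "orbit ?MM (\<lambda>m. m) \<alpha> \<subseteq> ?O"
      proof
        fix y assume "y \<in> orbit ?MM (\<lambda>m. m) \<alpha>"
        then obtain m where m: "m \<in> M" "y = m \<alpha>" unfolding orbit_def by auto
        then have "m \<in> Bij ?O" using MG GS by blast
        then show "y \<in> ?O" using Bij_app[OF _ \<alpha>O] m(2) by blast
      qed
      show "?O \<subseteq> orbit ?MM (\<lambda>m. m) \<alpha>"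
      proof
        fix y assume "y \<in> ?O"
        then obtain m where "m \<in> M" "m \<alpha> = y" using M_trans \<alpha>O by blast
        then show "y \<in> orbit ?MM (\<lambda>m. m) \<alpha>" unfolding orbit_def by auto
      qed
    qed
    have "card (orbit ?MM (\<lambda>m. m) \<alpha>) * card (stabilizer ?MM (\<lambda>m. m) \<alpha>) = order ?MM"
      using group_action.orbit_stabilizer_theorem[OF ga \<alpha>O] .
    then have "card ?O * card (stabilizer ?MM (\<lambda>m. m) \<alpha>) = card M" using orb unfolding order_def by simp
    then have "card ?O dvd card M" by (metis dvd_triv_left)
    then have "card D ^ l dvd card M" using card_Omega[of l D] by simp
    then have "card D ^ l dvd fact l" using d1 by (rule dvd_trans)
    then show False using no_pow_dvd_fact[OF D(2)] l by simp
  qed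
  have Mpi: "\<And>m. m \<in> M \<Longrightarrow> pi m = \<one>\<^bsub>?SL\<^esub>" using MB MG unfolding B_def kernel_def by auto
  define \<alpha> where "\<alpha> = (\<lambda>i\<in>{..<l}. a1)"
  have \<alpha>O: "\<alpha> \<in> ?O" using a1 unfolding \<alpha>_def Omega_def by simp
  have \<beta>O: "\<beta> \<in> ?O" using graph(1) \<beta> unfolding graph_on_def by blast
  have E\<beta>: "E \<alpha> \<beta>" using \<beta> \<alpha>_def by simp
  have GB: "\<And>g. g \<in> G \<Longrightarrow> g \<in> Bij ?O" using GS by blast
  have stab: "\<And>g. g \<in> G \<Longrightarrow> \<exists>g'\<in>G. g' \<alpha> = \<alpha> \<and> pi g' = pi g"
  proof -
    fix g assume g: "g \<in> G"
    have g\<alpha>: "g \<alpha> \<in> ?O" using Bij_app[OF GB[OF g] \<alpha>O] .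
    obtain m where m: "m \<in> M" "m (g \<alpha>) = \<alpha>" using M_trans g\<alpha> \<alpha>O by blast
    have mG: "m \<in> G" using MG m(1) by blast
    have 1: "m \<otimes>\<^bsub>?S\<^esub> g \<in> G" using Gmul[OF mG g] .
    have 2: "(m \<otimes>\<^bsub>?S\<^esub> g) \<alpha> = \<alpha>" using BG_mult_app[OF GB[OF mG] GB[OF g] \<alpha>O] m(2) by simp
    have "pi (m \<otimes>\<^bsub>?S\<^esub> g) = pi m \<otimes>\<^bsub>?SL\<^esub> pi g" using pimul[OF mG g] .
    also have "\<dots> = pi g" using Mpi[OF m(1)] monoid.l_one[OF group.is_monoid[OF BG_group], of "pi g" "{..<l}"] piB[OF g] by (simp add: BG_carrier)
    finally show "\<exists>g'\<in>G. g' \<alpha> = \<alpha> \<and> pi g' = pi g" using 1 2 by blast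
  qed
  have eB: "(\<lambda>i\<in>{..<l}. i) \<in> Bij {..<l}" by (rule id_Bij)
  have e_eq: "\<one>\<^bsub>?SL\<^esub> = (\<lambda>i\<in>{..<l}. i)" by (simp add: BG_one)
  have key: "\<And>i. i < l \<Longrightarrow> \<exists>k. k \<in> K \<and> k a1 = a1 \<and> k (\<beta> i) = \<beta> 0"
  proof -
    fix i assume i: "i < l"
    obtain h where h: "h \<in> pi ` G" "h i = 0" using top_trans i l0 pi_def by blast
    then obtain g0 where g0: "g0 \<in> G" "h = pi g0" by blast
    obtain g where g: "g \<in> G" "g \<alpha> = \<alpha>" "pi g = h" using stab[OF g0(1)] g0(2) by metis
    obtain gs where gs: "gs \<in> PiE {..<l} (\<lambda>_. K)" "g = wr_elt l D gs (pi g)" using dec[OF g(1)] by blast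
    have hB: "pi g \<in> Bij {..<l}" using piB[OF g(1)] .
    have pgi: "pi g i = 0" using g(3) h(2) by simp
    have "g \<alpha> (pi g i) = gs i (\<alpha> i)" using wr_app[OF \<alpha>O hB i, of gs] gs(2) by simp
    then have gsa: "gs i a1 = a1" using g(2) pgi l0 i \<alpha>_def by simp
    have gb: "g \<beta> 0 = gs i (\<beta> i)" using wr_app[OF \<beta>O hB i, of gs] gs(2) pgi by simp
    have g\<beta>O: "g \<beta> \<in> ?O" using Bij_app[OF GB[OF g(1)] \<beta>O] .
    have "g \<in> graph_aut ?O E" using aut g(1) by blast
    then have "E (g \<alpha>) (g \<beta>)" using E\<beta> \<alpha>O \<beta>O unfolding graph_aut_def by blast
    then have E2: "E \<alpha> (g \<beta>)" using g(2) by simp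
    obtain m where m: "m \<in> M" "m \<alpha> = \<alpha>" "m \<beta> = g \<beta>"
      using arc E\<beta> E2 unfolding arc_transitive_def by blast
    have mG: "m \<in> G" using MG m(1) by blast
    obtain ms where ms: "ms \<in> PiE {..<l} (\<lambda>_. K)" "m = wr_elt l D ms (pi m)" using dec[OF mG] by blast
    have pm: "pi m = (\<lambda>i\<in>{..<l}. i)" using Mpi[OF m(1)] e_eq by simp
    have ma: "m \<alpha> 0 = ms 0 a1" using wr_app[OF \<alpha>O eB l0, of ms] ms(2) pm l0 \<alpha>_def by simp
    then have msa: "ms 0 a1 = a1" using m(2) l0 \<alpha>_def by simp
    have mb: "m \<beta> 0 = ms 0 (\<beta> 0)" using wr_app[OF \<beta>O eB l0, of ms] ms(2) pm l0 by simp
    have ms0: "ms 0 \<in> K" using ms(1) l0 by (simp add: PiE_iff)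
    have gsi: "gs i \<in> K" using gs(1) i by (simp add: PiE_iff)
    define k where "k = inv\<^bsub>?SD\<^esub> (ms 0) \<otimes>\<^bsub>?SD\<^esub> gs i"
    have kK: "k \<in> K" unfolding k_def using Kmul[OF Kinv[OF ms0] gsi] .
    have ms0B: "ms 0 \<in> Bij D" and gsiB: "gs i \<in> Bij D" using ms0 gsi KB by auto
    have b0: "\<beta> 0 \<in> D" "\<beta> i \<in> D" using Omega_D[OF \<beta>O] l0 i by auto
    have kapp: "\<And>x. x \<in> D \<Longrightarrow> k x = (inv\<^bsub>?SD\<^esub> (ms 0)) (gs i x)"
      unfolding k_def using BG_mult_app[OF BG_inv_Bij[OF ms0B] gsiB] by blast
    have "k a1 = a1" using kapp[OF a1] gsa BG_inv_app[OF ms0B a1] msa by simp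
    moreover have "k (\<beta> i) = \<beta> 0" using kapp[OF b0(2)] gb m(3) mb BG_inv_app[OF ms0B b0(1)] by simp
    ultimately show "\<exists>k. k \<in> K \<and> k a1 = a1 \<and> k (\<beta> i) = \<beta> 0" using kK by blast
  qed
  define kk where "kk = (\<lambda>i\<in>{..<l}. SOME k. k \<in> K \<and> k a1 = a1 \<and> k (\<beta> i) = \<beta> 0)"
  have kk: "\<And>i. i < l \<Longrightarrow> kk i \<in> K \<and> kk i a1 = a1 \<and> kk i (\<beta> i) = \<beta> 0"
  proof -
    fix i assume i: "i < l"
    then have "kk i = (SOME k. k \<in> K \<and> k a1 = a1 \<and> k (\<beta> i) = \<beta> 0)" by (simp add: kk_def)
    then show "kk i \<in> K \<and> kk i a1 = a1 \<and> kk i (\<beta> i) = \<beta> 0" using someI_ex[OF key[OF i]] by simp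
  qed
  let ?e = "\<lambda>i\<in>{..<l}. i"
  have kkK: "kk \<in> PiE {..<l} (\<lambda>_. {k \<in> K. k a1 = a1})" using kk by (simp add: PiE_iff kk_def)
  have kkK': "kk \<in> PiE {..<l} (\<lambda>_. K)" using kk by (simp add: PiE_iff kk_def)
  have kkB: "kk \<in> PiE {..<l} (\<lambda>_. Bij D)" using PiK[OF kkK'] .
  define h where "h = wr_elt l D kk ?e"
  have hbase: "h \<in> base_power l D {k \<in> K. k a1 = a1}" unfolding base_power_def h_def using kkK by blast
  have hB: "h \<in> Bij ?O" unfolding h_def using wr_Bij[OF kkB eB] .
  have h\<beta>: "h \<beta> = (\<lambda>i\<in>{..<l}. \<beta> 0)"
    unfolding h_def wr_char[OF \<beta>O eB] using kk by simp
  have h\<alpha>: "h \<alpha> = \<alpha>"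
    unfolding h_def wr_char[OF \<alpha>O eB] using kk by (simp add: \<alpha>_def)
  have img: "image_graph h E (\<lambda>i\<in>{..<l}. a1) (\<lambda>i\<in>{..<l}. \<beta> 0)"
    unfolding image_graph_def using E\<beta> h\<alpha> h\<beta> \<alpha>_def by metis
  let ?ih = "inv\<^bsub>?S\<^esub> h"
  have ihB: "?ih \<in> Bij ?O" using BG_inv_Bij[OF hB] .
  have igc: "\<And>x y. x \<in> ?O \<Longrightarrow> y \<in> ?O \<Longrightarrow> image_graph h E x y \<longleftrightarrow> E (?ih x) (?ih y)"
  proof -
    fix x y assume x: "x \<in> ?O" and y: "y \<in> ?O"
    show "image_graph h E x y \<longleftrightarrow> E (?ih x) (?ih y)"
    proof
      assume "image_graph h E x y"
      then obtain u v where uv: "E u v" "x = h u" "y = h v" unfolding image_graph_def by blast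
      then have "u \<in> ?O" "v \<in> ?O" using graph(1) unfolding graph_on_def by blast+
      then show "E (?ih x) (?ih y)" using uv BG_inv_app[OF hB] by simp
    next
      assume "E (?ih x) (?ih y)"
      moreover have "x = h (?ih x)" "y = h (?ih y)" using BG_app_inv[OF hB] x y by simp_all
      ultimately show "image_graph h E x y" unfolding image_graph_def by blast
    qed
  qed
  have ih_eq: "?ih = wr_elt l D (\<lambda>j\<in>{..<l}. inv\<^bsub>?SD\<^esub> (kk j)) ?e"
  proof -
    have ie: "inv\<^bsub>?SL\<^esub> ?e = ?e" using monoid.inv_one[OF group.is_monoid[OF BG_group], of "{..<l}"] e_eq by simp
    have "?ih = wr_elt l D (\<lambda>j\<in>{..<l}. inv\<^bsub>?SD\<^esub> (kk ((inv\<^bsub>?SL\<^esub> ?e) j))) (inv\<^bsub>?SL\<^esub> ?e)"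
      unfolding h_def using wr_inv[OF kkB eB] .
    also have "\<dots> = wr_elt l D (\<lambda>j\<in>{..<l}. inv\<^bsub>?SD\<^esub> (kk j)) ?e"
    proof -
      have "(\<lambda>j\<in>{..<l}. inv\<^bsub>?SD\<^esub> (kk ((inv\<^bsub>?SL\<^esub> ?e) j))) = (\<lambda>j\<in>{..<l}. inv\<^bsub>?SD\<^esub> (kk j))"
        using ie by (intro restrict_ext) simp
      then show ?thesis using ie by simp
    qed
    finally show ?thesis .
  qed
  have ikB: "(\<lambda>j\<in>{..<l}. inv\<^bsub>?SD\<^esub> (kk j)) \<in> PiE {..<l} (\<lambda>_. Bij D)"
    by (simp add: PiE_iff BG_inv_Bij Bij_PiE[OF kkB])
  have conjG: "\<And>c. c \<in> conj_set ?S G h \<Longrightarrow> \<exists>g\<in>G. c = h \<otimes>\<^bsub>?S\<^esub> g \<otimes>\<^bsub>?S\<^esub> ?ih"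
    unfolding conj_set_def by blast
  have part3: "conj_set ?S G h \<subseteq> graph_aut ?O (image_graph h E)"
  proof
    fix c assume "c \<in> conj_set ?S G h"
    then obtain g where g: "g \<in> G" "c = h \<otimes>\<^bsub>?S\<^esub> g \<otimes>\<^bsub>?S\<^esub> ?ih" using conjG by blast
    have gB: "g \<in> Bij ?O" using GB[OF g(1)] .
    have hgB: "h \<otimes>\<^bsub>?S\<^esub> g \<in> Bij ?O" using BG_mult_Bij[OF hB gB] .
    have cB: "c \<in> Bij ?O" using BG_mult_Bij[OF hgB ihB] g(2) by simp
    have capp: "\<And>x. x \<in> ?O \<Longrightarrow> c x = h (g (?ih x))"
    proof -
      fix x assume x: "x \<in> ?O"
      have ix: "?ih x \<in> ?O" using Bij_app[OF ihB x] .
      have "c x = (h \<otimes>\<^bsub>?S\<^esub> g) (?ih x)" using BG_mult_app[OF hgB ihB x] g(2) by simp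
      also have "\<dots> = h (g (?ih x))" using BG_mult_app[OF hB gB ix] .
      finally show "c x = h (g (?ih x))" .
    qed
    have ga: "g \<in> graph_aut ?O E" using aut g(1) by blast
    show "c \<in> graph_aut ?O (image_graph h E)"
      unfolding graph_aut_def
    proof (intro CollectI conjI ballI)
      show "c \<in> carrier ?S" using cB by (simp add: BG_carrier)
      fix x y assume x: "x \<in> ?O" and y: "y \<in> ?O"
      have ix: "?ih x \<in> ?O" "?ih y \<in> ?O" using Bij_app[OF ihB x] Bij_app[OF ihB y] by auto
      have gx: "g (?ih x) \<in> ?O" "g (?ih y) \<in> ?O" using Bij_app[OF gB ix(1)] Bij_app[OF gB ix(2)] by auto
      have cx: "c x \<in> ?O" "c y \<in> ?O" using Bij_app[OF cB x] Bij_app[OF cB y] by auto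
      have "image_graph h E (c x) (c y) \<longleftrightarrow> E (?ih (c x)) (?ih (c y))" using igc[OF cx] .
      also have "\<dots> \<longleftrightarrow> E (g (?ih x)) (g (?ih y))" using capp[OF x] capp[OF y] BG_inv_app[OF hB] gx by simp
      also have "\<dots> \<longleftrightarrow> E (?ih x) (?ih y)" using ga ix unfolding graph_aut_def by blast
      also have "\<dots> \<longleftrightarrow> image_graph h E x y" using igc[OF x y] by simp
      finally show "image_graph h E x y \<longleftrightarrow> image_graph h E (c x) (c y)" by simp
    qed
  qed
  have part4: "conj_set ?S G h \<subseteq> wreath l D K (pi ` G)"
  proof
    fix c assume "c \<in> conj_set ?S G h"
    then obtain g where g: "g \<in> G" "c = h \<otimes>\<^bsub>?S\<^esub> g \<otimes>\<^bsub>?S\<^esub> ?ih" using conjG by blast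
    obtain gs where gs: "gs \<in> PiE {..<l} (\<lambda>_. K)" "g = wr_elt l D gs (pi g)" using dec[OF g(1)] by blast
    let ?s = "pi g"
    have sB: "?s \<in> Bij {..<l}" using piB[OF g(1)] .
    have sj: "\<And>j. j < l \<Longrightarrow> ?s j < l" using Bij_L[OF sB] by blast
    have gsB: "gs \<in> PiE {..<l} (\<lambda>_. Bij D)" using PiK[OF gs(1)] .
    let ?g1 = "\<lambda>j\<in>{..<l}. kk (?s j) \<otimes>\<^bsub>?SD\<^esub> gs j"
    have es: "?e \<otimes>\<^bsub>?SL\<^esub> ?s = ?s"
      using monoid.l_one[OF group.is_monoid[OF BG_group], of ?s "{..<l}"] sB e_eq by (simp add: BG_carrier)
    have se: "?s \<otimes>\<^bsub>?SL\<^esub> ?e = ?s"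
      using monoid.r_one[OF group.is_monoid[OF BG_group], of ?s "{..<l}"] sB e_eq by (simp add: BG_carrier)
    have g1B: "?g1 \<in> PiE {..<l} (\<lambda>_. Bij D)"
      by (simp add: PiE_iff BG_mult_Bij Bij_PiE[OF kkB] Bij_PiE[OF gsB] sj)
    have "h \<otimes>\<^bsub>?S\<^esub> g = wr_elt l D ?g1 ?s"
      unfolding h_def using wr_mult[OF kkB eB gsB sB] gs(2) es by simp
    then have "c = wr_elt l D ?g1 ?s \<otimes>\<^bsub>?S\<^esub> wr_elt l D (\<lambda>j\<in>{..<l}. inv\<^bsub>?SD\<^esub> (kk j)) ?e"
      using g(2) ih_eq by simp
    also have "\<dots> = wr_elt l D (\<lambda>j\<in>{..<l}. ?g1 (?e j) \<otimes>\<^bsub>?SD\<^esub> (\<lambda>j\<in>{..<l}. inv\<^bsub>?SD\<^esub> (kk j)) j) ?s"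
      using wr_mult[OF g1B sB ikB eB] se by simp
    also have "(\<lambda>j\<in>{..<l}. ?g1 (?e j) \<otimes>\<^bsub>?SD\<^esub> (\<lambda>j\<in>{..<l}. inv\<^bsub>?SD\<^esub> (kk j)) j)
        = (\<lambda>j\<in>{..<l}. (kk (?s j) \<otimes>\<^bsub>?SD\<^esub> gs j) \<otimes>\<^bsub>?SD\<^esub> inv\<^bsub>?SD\<^esub> (kk j))"
      by (intro restrict_ext) simp
    finally have c_eq: "c = wr_elt l D (\<lambda>j\<in>{..<l}. (kk (?s j) \<otimes>\<^bsub>?SD\<^esub> gs j) \<otimes>\<^bsub>?SD\<^esub> inv\<^bsub>?SD\<^esub> (kk j)) ?s" .
    have cK: "(\<lambda>j\<in>{..<l}. (kk (?s j) \<otimes>\<^bsub>?SD\<^esub> gs j) \<otimes>\<^bsub>?SD\<^esub> inv\<^bsub>?SD\<^esub> (kk j)) \<in> PiE {..<l} (\<lambda>_. K)"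
    proof -
      have "\<And>j. j < l \<Longrightarrow> (kk (?s j) \<otimes>\<^bsub>?SD\<^esub> gs j) \<otimes>\<^bsub>?SD\<^esub> inv\<^bsub>?SD\<^esub> (kk j) \<in> K"
      proof -
        fix j assume j: "j < l"
        have "kk (?s j) \<in> K" "gs j \<in> K" "kk j \<in> K" using kk[OF sj[OF j]] gs(1) j kk[OF j] by (auto simp: PiE_iff)
        then show "(kk (?s j) \<otimes>\<^bsub>?SD\<^esub> gs j) \<otimes>\<^bsub>?SD\<^esub> inv\<^bsub>?SD\<^esub> (kk j) \<in> K" using Kmul Kinv by blast
      qed
      then show ?thesis by (simp add: PiE_iff)
    qed
    have "?s \<in> pi ` G" using g(1) by blast
    then show "c \<in> wreath l D K (pi ` G)" unfolding wreath_def using c_eq cK by blast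
  qed
  show ?thesis
    using hbase h\<beta> img part3 part4 K_def pi_def by blast
qed

end
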